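(* Let $T=\langle a,b,c\rangle$ with $1<a<b<c$, $\gcd(a,b)=\gcd(a,c)=\gcd(b,c)=1$ and $c\notin\langle a,b\rangle$, and let $\mathrm L(l,h,w,y)$ be the (unique) L-shape related to $T$. Then $h<a$ and $l<b$.
   Context: $\langle a,b\rangle=\{xa+yb:x,y\in\mathbb N\}$ and $T=\langle a,b,c\rangle=\{xa+yb+zc:x,y,z\in\mathbb N\}$. For $(i,j)\in\mathbb N^2$ let $[\![i,j]\!]=[i,i+1)\times[j,j+1)\subset\mathbb R^2$. For integers $0\le w<l$, $0\le y<h$, the L-shape $\mathrm L(l,h,w,y)$ is the set of unit squares $[\![i,j]\!]$ with $0\le i<l$, $0\le j<h$, excluding those with $i\ge l-w$ and $j\ge h-y$ (it has $lh-wy$ squares). An L-shape $\mathcal H$ is related to $T$ if it consists of exactly $c$ squares, every residue class modulo $c$ equals $ia+jb \bmod c$ for exactly one $[\![i,j]\!]\in\mathcal H$, and for each $[\![i,j]\!]\in\mathcal H$, $ia+jb=\min\{sa+tb:(s,t)\in\mathbb N^2,\ sa+tb\equiv ia+jb \pmod c\}$. *)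

theory Defs
  imports Main
begin

definition gen2 :: "nat \<Rightarrow> nat \<Rightarrow> nat set" where
  "gen2 a b = {x * a + y * b | x y. True}"

text \<open>The L-shape L(l,h,w,y); the unit square [[i,j]] is represented by the pair (i,j).\<close>
definition Lshape :: "nat \<Rightarrow> nat \<Rightarrow> nat \<Rightarrow> nat \<Rightarrow> (nat \<times> nat) set" where
  "Lshape l h w y = {(i, j). i < l \<and> j < h \<and> \<not> (i \<ge> l - w \<and> j \<ge> h - y)}"

definition related :: "nat \<Rightarrow> nat \<Rightarrow> nat \<Rightarrow> (nat \<times> nat) set \<Rightarrow> bool" where
  "related a b c H \<longleftrightarrow>
     card H = c \<and>
     (\<forall>r < c. \<exists>!p. p \<in> H \<and> (fst p * a + snd p * b) mod c = r) \<and>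
     (\<forall>(i, j) \<in> H. i * a + j * b =
        (LEAST n. \<exists>s t. n = s * a + t * b \<and> n mod c = (i * a + j * b) mod c))"

end

theory Submission
  imports Defs "HOL-Number_Theory.Number_Theory"
begin

lemma gen2_sym: "gen2 a b = gen2 b a"
proof -
  have "\<And>a b n. n \<in> gen2 a b \<Longrightarrow> n \<in> gen2 b a"
  proof -
    fix a b n :: nat
    assume "n \<in> gen2 a b"
    then obtain x y where "n = x * a + y * b" unfolding gen2_def by blast
    hence "n = y * b + x * a" by simp
    thus "n \<in> gen2 b a" unfolding gen2_def by blast
  qed
  thus ?thesis by blast
qed

lemma repr:
  fixes a b c :: nat
  assumes "0 < a" "gcd a b = 1" "c \<notin> gen2 a b"
  shows "\<exists>x y. 0 < y \<and> y < a \<and> c + x * a = y * b"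
proof -
  have g: "gcd b a dvd c" using assms(2) by (simp only: gcd.commute[of b a] one_dvd)
  obtain y0 where y0: "[b * y0 = c] (mod a)" using cong_solve_dvd_nat[OF g] by blast
  define y where "y = y0 mod a"
  have ya: "y < a" using assms(1) y_def by simp
  have "(y * b) mod a = (y0 * b) mod a" unfolding y_def by (simp add: mod_mult_left_eq)
  hence cg: "(y * b) mod a = c mod a" using y0 unfolding cong_def by (simp add: mult.commute)
  have gt: "c < y * b"
  proof (rule ccontr)
    assume "\<not> c < y * b"
    hence le: "y * b \<le> c" by simp
    have "a dvd c - y * b" using cg mod_eq_dvd_iff_nat[OF le, of a] by simp
    then obtain k where "c - y * b = a * k" by blast
    hence ck: "c = k * a + y * b" using le by (simp add: mult.commute)
    have "c \<in> gen2 a b" unfolding gen2_def ck by (rule CollectI, rule exI[of _ k], rule exI[of _ y], simp)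
    thus False using assms(3) by simp
  qed
  have "a dvd y * b - c" using cg mod_eq_dvd_iff_nat[OF less_imp_le[OF gt], of a] by simp
  then obtain x where x: "y * b - c = a * x" by blast
  hence "c + x * a = y * b" using gt by (simp add: mult.commute)
  moreover have "0 < y" using gt by (cases y) auto
  ultimately show ?thesis using ya by blast
qed

lemma no_high:
  fixes a b c :: nat
  assumes rel: "related a b c H" and mem: "(i, j) \<in> H"
    and eq: "c + x * a = yy * b" and jy: "yy \<le> j" and c0: "0 < c"
  shows False
proof -
  define v where "v = i * a + j * b"
  have vmin: "v = (LEAST n. \<exists>s t. n = s * a + t * b \<and> n mod c = v mod c)"
    using rel mem unfolding related_def v_def by auto
  have jb: "j * b = (j - yy) * b + yy * b" using jy by (simp add: add_mult_distrib[symmetric])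
  have v2: "v = ((i + x) * a + (j - yy) * b) + c"
    unfolding v_def using jb eq by (simp add: algebra_simps)
  define n' where "n' = (i + x) * a + (j - yy) * b"
  have "n' mod c = v mod c" using v2 n'_def by simp
  hence "\<exists>s t. n' = s * a + t * b \<and> n' mod c = v mod c" using n'_def by blast
  hence "(LEAST n. \<exists>s t. n = s * a + t * b \<and> n mod c = v mod c) \<le> n'" by (rule Least_le)
  hence "v \<le> n'" using vmin by simp
  thus False using v2 n'_def c0 by simp
qed

lemma no_high2:
  fixes a b c :: nat
  assumes rel: "related a b c H" and mem: "(i, j) \<in> H"
    and eq: "c + x * b = yy * a" and jy: "yy \<le> i" and c0: "0 < c"
  shows False
proof -
  define v where "v = i * a + j * b"
  have vmin: "v = (LEAST n. \<exists>s t. n = s * a + t * b \<and> n mod c = v mod c)"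
    using rel mem unfolding related_def v_def by auto
  have jb: "i * a = (i - yy) * a + yy * a" using jy by (simp add: add_mult_distrib[symmetric])
  have v2: "v = ((i - yy) * a + (j + x) * b) + c"
    unfolding v_def using jb eq by (simp add: algebra_simps)
  define n' where "n' = (i - yy) * a + (j + x) * b"
  have "n' mod c = v mod c" using v2 n'_def by simp
  hence "\<exists>s t. n' = s * a + t * b \<and> n' mod c = v mod c" using n'_def by blast
  hence "(LEAST n. \<exists>s t. n = s * a + t * b \<and> n mod c = v mod c) \<le> n'" by (rule Least_le)
  hence "v \<le> n'" using vmin by simp
  thus False using v2 n'_def c0 by simp
qed

theorem lemma10:
  fixes a b c l h w y :: nat
  assumes "1 < a" and "a < b" and "b < c"
    and "gcd a b = 1" and "gcd a c = 1" and "gcd b c = 1"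
    and "c \<notin> gen2 a b"
    and "w < l" and "y < h"
    and "related a b c (Lshape l h w y)"
  shows "h < a \<and> l < b"
proof
  show "h < a"
  proof (rule ccontr)
    assume "\<not> h < a"
    obtain x yy where r: "0 < yy" "yy < a" "c + x * a = yy * b"
      using repr[of a b c] assms by auto
    have "(0, yy) \<in> Lshape l h w y" using r \<open>\<not> h < a\<close> assms(8)
      unfolding Lshape_def by auto
    from no_high[OF assms(10) this r(3)] assms(3) show False by simp
  qed
next
  show "l < b"
  proof (rule ccontr)
    assume "\<not> l < b"
    obtain x yy where r: "0 < yy" "yy < b" "c + x * b = yy * a"
    proof -
      have n: "c \<notin> gen2 b a" using assms(7) unfolding gen2_sym[of a b] .
      have g: "gcd b a = 1" using assms(4) by (simp only: gcd.commute[of b a])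
      have "0 < b" using assms by simp
      from repr[OF this g n] show ?thesis using that by blast
    qed
    have "(yy, 0) \<in> Lshape l h w y" using r \<open>\<not> l < b\<close> assms(9)
      unfolding Lshape_def by auto
    from no_high2[OF assms(10) this r(3)] assms(3) show False by simp
  qed
qed

end
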